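(* Fix a layer $\ell$ of a neural network with weight matrix $W_\ell\in\mathbb{R}^{m\times n}$ and a perturbation $E_\ell\in\mathbb{R}^{m\times n}$, and set $\widehat W_\ell=W_\ell-E_\ell$. Let $z$ and $z'$ be independent random samples ($z$ from a training distribution, $z'$ from a possibly different validation distribution). For a sample $z$ let $h_\ell(z)\in\mathbb{R}^n$ be the input to layer $\ell$ (independent of $W_\ell$), $\delta_\ell(z)\in\mathbb{R}^m$ the upstream gradient at layer $\ell$ under weights $W_\ell$, and $\widehat\delta_\ell(z)$ the upstream gradient under weights $\widehat W_\ell$. Let $C_{h,\ell}=\mathbb{E}_z[h_\ell(z)h_\ell(z)^\top]$ and $C_{\delta,\ell}=\mathbb{E}_z[\delta_\ell(z)\delta_\ell(z)^\top]$, assumed symmetric positive definite, and set $\tilde h_\ell=C_{h,\ell}^{-1/2}h_\ell$, $\tilde\delta_\ell=C_{\delta,\ell}^{-1/2}\delta_\ell$, $\widehat{\tilde\delta}_\ell=C_{\delta,\ell}^{-1/2}\widehat\delta_\ell$, $\Delta\tilde\delta_\ell=\widehat{\tilde\delta}_\ell-\tilde\delta_\ell$. Define the layer-$\ell$ influence-function contributions $$I_{\mathrm{IF},W_\ell}(z,z')=-\langle\tilde h_\ell(z'),\tilde h_\ell(z)\rangle\,\langle\tilde\delta_\ell(z'),\tilde\delta_\ell(z)\rangle,\qquad I_{\mathrm{IF},\widehat W_\ell}(z,z')=-\langle\tilde h_\ell(z'),\tilde h_\ell(z)\rangle\,\langle\widehat{\tilde\delta}_\ell(z'),\widehat{\tilde\delta}_\ell(z)\rangle,$$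 the first-order term $$\Delta I^{(1)}(z,z')=-\langle\Delta\tilde\delta_\ell(z'),\tilde\delta_\ell(z)\rangle\langle\tilde h_\ell(z'),\tilde h_\ell(z)\rangle-\langle\tilde\delta_\ell(z'),\Delta\tilde\delta_\ell(z)\rangle\langle\tilde h_\ell(z'),\tilde h_\ell(z)\rangle,$$ and the remainder $R(z,z')=I_{\mathrm{IF},\widehat W_\ell}(z,z')-I_{\mathrm{IF},W_\ell}(z,z')-\Delta I^{(1)}(z,z')$. Assume: (B1) $\mathbb{E}_z[\|\tilde\delta_\ell(z)\|\|\tilde h_\ell(z)\|]$ and $\mathbb{E}_{z'}[\|\tilde\delta_\ell(z')\|\|\tilde h_\ell(z')\|]$ are finite. (B2) There is a measurable $K(\cdot)\ge0$ with $\|\widehat\delta_\ell(z)-\delta_\ell(z)\|\le K(z)\|E_\ell\|_F$ (for $z$ and $z'$), and $\mathbb{E}_z[K(z)\|\tilde h_\ell(z)\|]$, $\mathbb{E}_{z'}[K(z')\|\tilde h_\ell(z')\|]$ are finite. (B3) There exist $\rho>0$ and $c_{\mathrm{rem}}$ such that whenever $\|C_{\delta,\ell}^{-1/2}(W_\ell-\widehat W_\ell)C_{h,\ell}^{-1/2}\|_F\le\rho$, one has $\mathbb{E}_{z,z'}|R(z,z')|\le c_{\mathrm{rem}}\|C_{\delta,\ell}^{-1/2}E_\ell C_{h,\ell}^{-1/2}\|_F^2$. Then there exists a finite, data-dependent constant $C_\kappa>0$ such that $$\mathbb{E}_{z,z'}\big|I_{\mathrm{IF},\widehat W_\ell}(z,z')-I_{\mathrm{IF},W_\ell}(z,z')\big|\le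 C_\kappa\,\big\|C_{\delta,\ell}^{-1/2}E_\ell C_{h,\ell}^{-1/2}\big\|_F.$$
   Context: Norms and inner products are Euclidean, $\|\cdot\|_F$ is the Frobenius norm, and $M^{-1/2}$ denotes the inverse of the symmetric positive definite square root. The quantity $I_{\mathrm{IF},W_\ell}$ is the layer-$\ell$ influence-function score $-\nabla_{w_\ell}L(z')^\top\tilde{\mathcal H}_\ell^{-1}\nabla_{w_\ell}L(z)$ under the Kronecker-factored (K-FAC) Hessian approximation $\tilde{\mathcal H}_\ell=C_{h,\ell}\otimes C_{\delta,\ell}$, where $w_\ell=\mathrm{vec}(W_\ell)$ and $\nabla_{w_\ell}L(z)=h_\ell(z)\otimes\delta_\ell(z)$. *)

theory Defs
  imports "HOL-Analysis.Analysis" "HOL-Probability.Probability"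
begin

definition spd_mat :: "real^'n^'n \<Rightarrow> bool" where
  "spd_mat A \<longleftrightarrow> transpose A = A \<and> (\<forall>x. x \<noteq> 0 \<longrightarrow> x \<bullet> (A *v x) > 0)"

definition spd_sqrt :: "real^'n^'n \<Rightarrow> real^'n^'n" where
  "spd_sqrt A = (THE S. spd_mat S \<and> S ** S = A)"

definition inv_sqrt :: "real^'n^'n \<Rightarrow> real^'n^'n" where
  "inv_sqrt A = matrix_inv (spd_sqrt A)"

definition frob_norm :: "real^'n^'m \<Rightarrow> real" where
  "frob_norm A = sqrt (\<Sum>i\<in>UNIV. \<Sum>j\<in>UNIV. (A $ i $ j)^2)"

definition outer :: "real^'m \<Rightarrow> real^'n \<Rightarrow> real^'n^'m" where
  "outer x y = (\<chi> i j. x $ i * y $ j)"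

definition IF_score :: "real^'n^'n \<Rightarrow> real^'m^'m \<Rightarrow> ('z \<Rightarrow> real^'n) \<Rightarrow> ('z \<Rightarrow> real^'m)
    \<Rightarrow> 'z \<Rightarrow> 'z \<Rightarrow> real" where
  "IF_score Sh Sd h d z z' =
     - (((Sh *v h z') \<bullet> (Sh *v h z)) * ((Sd *v d z') \<bullet> (Sd *v d z)))"

definition first_order_term :: "real^'n^'n \<Rightarrow> real^'m^'m \<Rightarrow> ('z \<Rightarrow> real^'n) \<Rightarrow> ('z \<Rightarrow> real^'m)
    \<Rightarrow> ('z \<Rightarrow> real^'m) \<Rightarrow> 'z \<Rightarrow> 'z \<Rightarrow> real" where
  "first_order_term Sh Sd h d dhat z z' =
     (let ht = (\<lambda>x. Sh *v h x); dt = (\<lambda>x. Sd *v d x);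
          Dd = (\<lambda>x. Sd *v dhat x - Sd *v d x)
      in - ((Dd z' \<bullet> dt z) * (ht z' \<bullet> ht z)) - ((dt z' \<bullet> Dd z) * (ht z' \<bullet> ht z)))"

definition remainder_term :: "real^'n^'n \<Rightarrow> real^'m^'m \<Rightarrow> ('z \<Rightarrow> real^'n) \<Rightarrow> ('z \<Rightarrow> real^'m)
    \<Rightarrow> ('z \<Rightarrow> real^'m) \<Rightarrow> 'z \<Rightarrow> 'z \<Rightarrow> real" where
  "remainder_term Sh Sd h d dhat z z' =
     IF_score Sh Sd h dhat z z' - IF_score Sh Sd h d z z' - first_order_term Sh Sd h d dhat z z'"

end

theory Submission
  imports Defs
begin


lemma sym_inner:
  fixes A :: "real^'n^'n"
  assumes "transpose A = A"
  shows "(A *v x) \<bullet> y = x \<bullet> (A *v y)"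
proof -
  have "(A *v x) \<bullet> y = (x v* transpose A) \<bullet> y" by simp
  also have "\<dots> = (x v* A) \<bullet> y" using assms by simp
  also have "\<dots> = x \<bullet> (A *v y)" by (rule dot_lmul_matrix)
  finally show ?thesis .
qed

lemma eigen_in_complement:
  fixes A :: "real^'n^'n"
  assumes sym: "transpose A = A"
    and eig: "\<And>b. b \<in> B \<Longrightarrow> \<exists>\<mu>. A *v b = \<mu> *\<^sub>R b"
    and nz: "x0 \<noteq> 0" "\<And>b. b \<in> B \<Longrightarrow> b \<bullet> x0 = 0"
  shows "\<exists>v. norm v = 1 \<and> (\<forall>b\<in>B. b \<bullet> v = 0) \<and> (\<exists>l. A *v v = l *\<^sub>R v)"
proof -
  define V where "V = {x. \<forall>b\<in>B. b \<bullet> x = 0}"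
  have subV: "subspace V" unfolding V_def subspace_def
    by (auto simp: inner_add_right inner_scaleR_right)
  have inv: "A *v x \<in> V" if "x \<in> V" for x
  proof -
    { fix b assume b: "b \<in> B"
      then obtain \<mu> where "A *v b = \<mu> *\<^sub>R b" using eig by blast
      then have "b \<bullet> (A *v x) = \<mu> * (b \<bullet> x)"
        using sym_inner[OF sym, of b x] by simp
      then have "b \<bullet> (A *v x) = 0" using that b unfolding V_def by simp }
    then show ?thesis unfolding V_def by blast
  qed
  define S where "S = V \<inter> sphere 0 1"
  have "compact S" unfolding S_def
    using closed_subspace[OF subV] compact_sphere by (simp add: closed_Int_compact)
  moreover have "S \<noteq> {}"
  proof -
    have "x0 /\<^sub>R norm x0 \<in> S" using nz unfolding S_def V_def
      by (auto simp: inner_scaleR_right)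
    then show ?thesis by blast
  qed
  moreover have "continuous_on S (\<lambda>x. x \<bullet> (A *v x))"
    by (intro continuous_on_inner continuous_on_id matrix_vector_mult_linear_continuous_on)
  ultimately have "\<exists>x\<in>S. \<forall>y\<in>S. y \<bullet> (A *v y) \<le> x \<bullet> (A *v x)"
    by (rule continuous_attains_sup)
  then obtain v where v: "v \<in> S" and vmax: "\<And>y. y \<in> S \<Longrightarrow> y \<bullet> (A *v y) \<le> v \<bullet> (A *v v)"
    by blast
  define l where "l = v \<bullet> (A *v v)"
  have vV: "v \<in> V" and nv: "norm v = 1" using v unfolding S_def by auto
  define g where "g = (\<lambda>x. l *\<^sub>R x - A *v x)"
  have psd: "x \<bullet> g x \<ge> 0" if "x \<in> V" for x
  proof (cases "x = 0")
    case True then show ?thesis by (simp add: g_def)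
  next
    case False
    let ?y = "x /\<^sub>R norm x"
    have "?y \<in> S" using that False subV unfolding S_def by (auto intro: subspace_scale)
    then have "?y \<bullet> (A *v ?y) \<le> l" using vmax l_def by blast
    then have "(x \<bullet> (A *v x)) / (norm x)^2 \<le> l"
      by (simp add: matrix_vector_mult_scaleR inner_scaleR_left inner_scaleR_right power2_eq_square field_simps)
    then have "x \<bullet> (A *v x) \<le> l * (norm x)^2" using False by (simp add: field_simps)
    then show ?thesis by (simp add: g_def inner_diff_right power2_norm_eq_inner)
  qed
  have glin: "g (a - t *\<^sub>R b) = g a - t *\<^sub>R g b" for a b t
    by (simp add: g_def matrix_vector_right_distrib matrix_vector_mult_diff_distrib matrix_vector_mult_scaleR algebra_simps)
  have gsym: "a \<bullet> g b = g a \<bullet> b" for a b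
    by (simp add: g_def inner_diff_right inner_diff_left sym_inner[OF sym])
  have gv0: "v \<bullet> g v = 0"
    using nv by (simp add: g_def l_def inner_diff_right power2_norm_eq_inner[symmetric])
  define w where "w = g v"
  have wV: "w \<in> V" unfolding w_def g_def using vV inv subV
    by (simp add: subspace_diff subspace_scale)
  have w0: "w = 0"
  proof (rule ccontr)
    assume "w \<noteq> 0"
    then have nw: "w \<bullet> w > 0" by simp
    have c: "w \<bullet> g w \<ge> 0" using psd wV by blast
    define t where "t = (w \<bullet> w) / (w \<bullet> g w + 1)"
    have tpos: "t > 0" using nw c by (simp add: t_def)
    have "v - t *\<^sub>R w \<in> V" using vV wV subV by (simp add: subspace_diff subspace_scale)
    then have ge0: "0 \<le> (v - t *\<^sub>R w) \<bullet> g (v - t *\<^sub>R w)" using psd by blast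
    have e1: "v \<bullet> g w = w \<bullet> w" using gsym[of v w] by (simp add: w_def)
    have e2: "w \<bullet> g v = w \<bullet> w" by (simp add: w_def)
    have "(v - t *\<^sub>R w) \<bullet> g (v - t *\<^sub>R w) = v \<bullet> g v - 2 * t * (w \<bullet> w) + t * t * (w \<bullet> g w)"
      unfolding glin by (simp add: inner_diff_left inner_diff_right e1 e2 algebra_simps)
    with ge0 have "0 \<le> v \<bullet> g v - 2 * t * (w \<bullet> w) + t * t * (w \<bullet> g w)" by simp
    then have "t * (2 * (w \<bullet> w)) \<le> t * (t * (w \<bullet> g w))" using gv0
      by (simp add: algebra_simps)
    then have "2 * (w \<bullet> w) \<le> t * (w \<bullet> g w)" using tpos
      by (simp add: mult_le_cancel_left_pos)
    moreover have "t * (w \<bullet> g w) < w \<bullet> w"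
      using nw c by (simp add: t_def field_simps)
    ultimately show False using nw by simp
  qed
  then have "A *v v = l *\<^sub>R v" by (simp add: w_def g_def)
  then show ?thesis using vV nv unfolding V_def by blast
qed

lemma spectral:
  fixes A :: "real^'n^'n"
  assumes sym: "transpose A = A"
  shows "\<exists>B. finite B \<and> pairwise orthogonal B \<and> (\<forall>b\<in>B. norm b = 1)
           \<and> (\<forall>b\<in>B. \<exists>\<mu>. A *v b = \<mu> *\<^sub>R b) \<and> span B = UNIV"
proof -
  define OE where "OE B \<longleftrightarrow> finite B \<and> pairwise orthogonal B \<and> (\<forall>b\<in>B. norm b = 1)
           \<and> (\<forall>b\<in>B. \<exists>\<mu>. A *v b = \<mu> *\<^sub>R b)" for B :: "(real^'n) set"
  have indep: "independent B" if "OE B" for B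
    using that unfolding OE_def by (intro pairwise_orthogonal_independent) auto
  have cardB: "card B = dim (span B)" if "OE B" for B
    using indep[OF that] by (simp add: dim_eq_card_independent)
  have step: "k \<le> dim (UNIV::(real^'n) set) \<Longrightarrow> \<exists>B. OE B \<and> card B = k" for k
  proof (induction k)
    case 0
    show ?case by (rule exI[of _ "{}"]) (simp add: OE_def)
  next
    case (Suc k)
    then obtain B where B: "OE B" "card B = k" by auto
    have "span B \<noteq> UNIV"
    proof
      assume "span B = UNIV"
      then have "card B = dim (UNIV::(real^'n) set)" using cardB[OF B(1)] by simp
      then show False using Suc.prems B(2) by simp
    qed
    then obtain a :: "real^'n" where a: "a \<noteq> 0" "\<And>x. x \<in> span B \<Longrightarrow> a \<bullet> x = 0"
      using span_not_UNIV_orthogonal by blast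
    have "\<exists>v. norm v = 1 \<and> (\<forall>b\<in>B. b \<bullet> v = 0) \<and> (\<exists>l. A *v v = l *\<^sub>R v)"
    proof (rule eigen_in_complement[OF sym, of B a])
      show "\<exists>\<mu>. A *v b = \<mu> *\<^sub>R b" if "b \<in> B" for b using B(1) that unfolding OE_def by blast
      show "a \<noteq> 0" by fact
      show "b \<bullet> a = 0" if "b \<in> B" for b using a(2)[of b] that span_base[of b B]
        by (simp add: inner_commute)
    qed
    then obtain v where v: "norm v = 1" "\<And>b. b \<in> B \<Longrightarrow> b \<bullet> v = 0" "\<exists>l. A *v v = l *\<^sub>R v"
      by blast
    have vB: "v \<notin> B"
    proof
      assume "v \<in> B"
      then have "v \<bullet> v = 0" using v(2) by blast
      then show False using v(1) by simp
    qed
    have "OE (insert v B)"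
      using B(1) v unfolding OE_def
      by (auto simp: pairwise_insert orthogonal_def inner_commute)
    moreover have "card (insert v B) = Suc k" using B vB unfolding OE_def by simp
    ultimately show ?case by blast
  qed
  then obtain B where B: "OE B" "card B = dim (UNIV::(real^'n) set)" by blast
  have "UNIV \<subseteq> span B"
    using card_eq_dim[of B UNIV] B indep[OF B(1)] unfolding OE_def by auto
  then show ?thesis using B(1) unfolding OE_def by auto
qed

lemma spd_sqrt_exists:
  fixes C :: "real^'n^'n"
  assumes C: "spd_mat C"
  shows "\<exists>S. spd_mat S \<and> S ** S = C"
proof -
  have sym: "transpose C = C" and pd: "\<And>x. x \<noteq> 0 \<Longrightarrow> x \<bullet> (C *v x) > 0"
    using C unfolding spd_mat_def by auto
  obtain B where B: "finite B" "pairwise orthogonal B" "\<And>b. b \<in> B \<Longrightarrow> norm b = 1"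
    "\<And>b. b \<in> B \<Longrightarrow> \<exists>\<mu>. C *v b = \<mu> *\<^sub>R b" "span B = UNIV"
    using spectral[OF sym] by blast
  define mu where "mu b = b \<bullet> (C *v b)" for b
  have Cb: "C *v b = mu b *\<^sub>R b" if bB: "b \<in> B" for b
  proof -
    obtain \<mu> where "C *v b = \<mu> *\<^sub>R b" using B(4) bB by blast
    moreover have "b \<bullet> b = 1" using B(3)[OF bB] by (simp add: norm_eq_1)
    ultimately show ?thesis by (simp add: mu_def)
  qed
  have mupos: "mu b > 0" if "b \<in> B" for b
  proof -
    have "b \<noteq> 0" using B(3)[OF that] by auto
    then show ?thesis using pd[of b] by (simp add: mu_def)
  qed
  have orth: "b \<bullet> c = (if b = c then 1 else 0)" if "b \<in> B" "c \<in> B" for b c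
    using B(2,3) that by (auto simp: pairwise_def orthogonal_def norm_eq_1)
  have expand: "(\<Sum>b\<in>B. (x \<bullet> b) *\<^sub>R b) = x" for x
    using orthonormal_basis_expand[OF B(2) B(3)] B(1,5) by auto
  define S :: "real^'n^'n" where "S = (\<chi> i j. \<Sum>b\<in>B. sqrt (mu b) * b $ i * b $ j)"
  have Sx: "S *v x = (\<Sum>b\<in>B. (sqrt (mu b) * (b \<bullet> x)) *\<^sub>R b)" for x
    by (simp add: S_def vec_eq_iff matrix_vector_mult_def inner_vec_def sum_distrib_left
        sum_distrib_right sum_component mult.assoc mult.left_commute)
      (subst sum.swap, simp add: mult.commute mult.left_commute)
  have Ssym: "transpose S = S"
    by (simp add: S_def transpose_def vec_eq_iff mult.commute mult.left_commute)
  have bSx: "b \<bullet> (S *v x) = sqrt (mu b) * (b \<bullet> x)" if "b \<in> B" for b x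
  proof -
    have "b \<bullet> (S *v x) = (\<Sum>c\<in>B. sqrt (mu c) * (c \<bullet> x) * (b \<bullet> c))"
      by (simp add: Sx inner_sum_right)
    also have "\<dots> = (\<Sum>c\<in>B. if c = b then sqrt (mu b) * (b \<bullet> x) else 0)"
      by (rule sum.cong) (auto simp: orth[OF that])
    also have "\<dots> = sqrt (mu b) * (b \<bullet> x)" using that B(1) by simp
    finally show ?thesis .
  qed
  have SS: "S *v (S *v x) = C *v x" for x
  proof -
    have "S *v (S *v x) = (\<Sum>b\<in>B. (mu b * (b \<bullet> x)) *\<^sub>R b)"
      by (simp add: Sx[of "S *v x"] bSx mupos less_imp_le mult.assoc[symmetric] cong: sum.cong)
    also have "\<dots> = C *v (\<Sum>b\<in>B. (x \<bullet> b) *\<^sub>R b)"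
      by (simp add: linear_sum[OF matrix_vector_mul_linear] matrix_vector_mult_scaleR Cb inner_commute mult.commute cong: sum.cong)
    also have "\<dots> = C *v x" by (simp add: expand)
    finally show ?thesis .
  qed
  have Spd: "x \<bullet> (S *v x) > 0" if "x \<noteq> 0" for x
  proof -
    have eq: "x \<bullet> (S *v x) = (\<Sum>b\<in>B. sqrt (mu b) * (b \<bullet> x)^2)"
      by (simp add: Sx inner_sum_right power2_eq_square inner_commute mult.assoc)
    have nn: "\<forall>b\<in>B. 0 \<le> sqrt (mu b) * (b \<bullet> x)^2" using mupos by (simp add: less_imp_le)
    have "x \<bullet> (S *v x) \<noteq> 0"
    proof
      assume "x \<bullet> (S *v x) = 0"
      then have "\<forall>b\<in>B. sqrt (mu b) * (b \<bullet> x)^2 = 0"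
        using sum_nonneg_eq_0_iff[OF B(1), of "\<lambda>b. sqrt (mu b) * (b \<bullet> x)^2"] nn eq by auto
      then have "\<forall>b\<in>B. x \<bullet> b = 0" using mupos by (force simp: inner_commute)
      then have "x = 0" using expand[of x] by simp
      then show False using that by simp
    qed
    moreover have "x \<bullet> (S *v x) \<ge> 0" using eq nn by (simp add: sum_nonneg)
    ultimately show ?thesis by simp
  qed
  have "S ** S = C" by (simp add: matrix_eq matrix_vector_mul_assoc[symmetric] SS)
  then show ?thesis using Ssym Spd unfolding spd_mat_def by blast
qed

lemma diag_sym_form:
  fixes D M :: "real^'n^'n"
  assumes "transpose D = D"
  shows "(D ** (M ** D)) $ i $ i = column i D \<bullet> (M *v column i D)"
proof -
  have Dij: "D $ i $ j = D $ j $ i" for i j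
    using assms by (metis transpose_def vec_lambda_beta)
  have "(D ** (M ** D)) $ i $ i = (\<Sum>j\<in>UNIV. D $ i $ j * (\<Sum>k\<in>UNIV. M $ j $ k * D $ k $ i))"
    by (simp add: matrix_matrix_mult_def)
  also have "\<dots> = (\<Sum>j\<in>UNIV. D $ j $ i * (\<Sum>k\<in>UNIV. M $ j $ k * D $ k $ i))"
    by (rule sum.cong[OF refl], subst Dij, rule refl)
  also have "\<dots> = column i D \<bullet> (M *v column i D)"
    by (simp add: matrix_vector_mult_def inner_vec_def column_def)
  finally show ?thesis .
qed

lemma spd_psd: "spd_mat S \<Longrightarrow> x \<bullet> (S *v x) \<ge> 0"
  unfolding spd_mat_def by (cases "x = 0") (auto intro: less_imp_le)

lemma spd_sqrt_unique:
  fixes S T :: "real^'n^'n"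
  assumes S: "spd_mat S" and T: "spd_mat T" and eq: "S ** S = T ** T"
  shows "S = T"
proof -
  define D where "D = S - T"
  have "transpose D = transpose S - transpose T" unfolding D_def
    by (simp add: transpose_def vec_eq_iff)
  then have Dsym: "transpose D = D" using S T unfolding spd_mat_def D_def by simp
  have l: "A ** (B - C) = A ** B - A ** C" for A B C :: "real^'n^'n"
    by (vector matrix_matrix_mult_def sum_subtractf right_diff_distrib)
  have r: "(B - C) ** A = B ** A - C ** A" for A B C :: "real^'n^'n"
    by (vector matrix_matrix_mult_def sum_subtractf left_diff_distrib)
  have "S ** D + D ** T = S ** S - T ** T"
    unfolding D_def l r by simp
  then have z: "S ** D + D ** T = 0" using eq by simp
  have "D ** (S ** D) + D ** (D ** T) = D ** (S ** D + D ** T)"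
    by (simp add: matrix_add_ldistrib)
  then have "trace (D ** (S ** D) + D ** (D ** T)) = 0"
    using z by (simp add: trace_def)
  then have "trace (D ** (S ** D)) + trace (D ** (D ** T)) = 0"
    by (simp only: trace_add)
  moreover have "trace (D ** (D ** T)) = trace (D ** (T ** D))"
    by (metis trace_mul_sym matrix_mul_assoc)
  ultimately have tsum: "(\<Sum>i\<in>UNIV. column i D \<bullet> (S *v column i D)) + (\<Sum>i\<in>UNIV. column i D \<bullet> (T *v column i D)) = 0"
    by (simp add: trace_def diag_sym_form[OF Dsym])
  have n1: "\<forall>i\<in>UNIV. column i D \<bullet> (S *v column i D) \<ge> 0" using spd_psd[OF S] by blast
  have n2: "\<forall>i\<in>UNIV. column i D \<bullet> (T *v column i D) \<ge> 0" using spd_psd[OF T] by blast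
  have s1: "(\<Sum>i\<in>UNIV. column i D \<bullet> (S *v column i D)) = 0"
  proof -
    have "(\<Sum>i\<in>UNIV. column i D \<bullet> (S *v column i D)) \<ge> 0" using n1 by (simp add: sum_nonneg)
    moreover have "(\<Sum>i\<in>UNIV. column i D \<bullet> (T *v column i D)) \<ge> 0" using n2 by (simp add: sum_nonneg)
    ultimately show ?thesis using tsum by linarith
  qed
  then have "\<forall>i\<in>UNIV. column i D \<bullet> (S *v column i D) = 0"
    using sum_nonneg_eq_0_iff[of UNIV "\<lambda>i. column i D \<bullet> (S *v column i D)"] n1 by simp
  then have "\<forall>i. column i D = 0"
  proof (intro allI)
    fix i assume a: "\<forall>i\<in>UNIV. column i D \<bullet> (S *v column i D) = 0"
    show "column i D = 0"
    proof (rule ccontr)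
      assume "column i D \<noteq> 0"
      then have "column i D \<bullet> (S *v column i D) > 0" using S unfolding spd_mat_def by blast
      then show False using a by simp
    qed
  qed
  then have "D = 0" by (simp add: column_def vec_eq_iff) 
  then show ?thesis by (simp add: D_def)
qed

lemma spd_sqrt_prop:
  fixes C :: "real^'n^'n"
  assumes "spd_mat C"
  shows "spd_mat (spd_sqrt C) \<and> spd_sqrt C ** spd_sqrt C = C"
proof -
  have "\<exists>!S. spd_mat S \<and> S ** S = C"
    using spd_sqrt_exists[OF assms] spd_sqrt_unique by metis
  then show ?thesis unfolding spd_sqrt_def by (rule theI')
qed

lemma inv_sqrt_inverse:
  fixes C :: "real^'n^'n"
  assumes "spd_mat C"
  shows "inv_sqrt C ** spd_sqrt C = mat 1" "spd_sqrt C ** inv_sqrt C = mat 1"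
proof -
  let ?S = "spd_sqrt C"
  have Ss: "spd_mat ?S" using spd_sqrt_prop[OF assms] by blast
  have "inj ((*v) ?S)"
  proof (rule injI)
    fix x y assume "?S *v x = ?S *v y"
    then have "?S *v (x - y) = 0" by (simp add: matrix_vector_mult_diff_distrib)
    then have "(x - y) \<bullet> (?S *v (x - y)) = 0" by simp
    then show "x = y" using Ss unfolding spd_mat_def by (metis less_irrefl right_minus_eq)
  qed
  then have "invertible ?S" using matrix_left_invertible_injective invertible_left_inverse by blast
  then have "\<exists>A'. ?S ** A' = mat 1 \<and> A' ** ?S = mat 1" unfolding invertible_def by blast
  then have "?S ** matrix_inv ?S = mat 1 \<and> matrix_inv ?S ** ?S = mat 1"
    unfolding matrix_inv_def by (rule someI_ex)
  then show "inv_sqrt C ** spd_sqrt C = mat 1" "spd_sqrt C ** inv_sqrt C = mat 1"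
    unfolding inv_sqrt_def by auto
qed



lemma mv_meas[measurable (raw)]:
  "f \<in> borel_measurable M \<Longrightarrow> (\<lambda>x. (A::real^'n^'m) *v f x) \<in> borel_measurable M"
  by (rule borel_measurable_continuous_on[OF matrix_vector_mult_linear_continuous_on])

lemma on_bound: "norm ((A::real^'n^'m) *v x) \<le> onorm ((*v) A) * norm x"
  by (rule onorm[OF matrix_vector_mul_bounded_linear])

lemma on_nonneg: "onorm ((*v) (A::real^'n^'m)) \<ge> 0"
  by (rule onorm_pos_le[OF matrix_vector_mul_bounded_linear])

lemma frob_nonneg: "frob_norm A \<ge> 0"
  unfolding frob_norm_def by (simp add: sum_nonneg)

lemma entry_le_frob: "\<bar>(A::real^'n^'m) $ i $ j\<bar> \<le> frob_norm A"
proof -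
  have "(A $ i $ j)^2 \<le> (\<Sum>j'\<in>UNIV. (A $ i $ j')^2)"
    by (rule member_le_sum) auto
  also have "\<dots> \<le> (\<Sum>i'\<in>UNIV. \<Sum>j'\<in>UNIV. (A $ i' $ j')^2)"
    by (rule member_le_sum[where f = "\<lambda>i'. \<Sum>j'\<in>UNIV. (A $ i' $ j')^2"]) (auto intro: sum_nonneg)
  finally have "sqrt ((A $ i $ j)^2) \<le> frob_norm A"
    unfolding frob_norm_def by (rule real_sqrt_le_mono)
  then show ?thesis by simp
qed

lemma frob_le_onorm:
  "frob_norm (A::real^'n^'m) \<le> sqrt (real CARD('m) * real CARD('n)) * onorm ((*v) A)"
proof -
  let ?o = "onorm ((*v) A)"
  have "(\<Sum>i\<in>UNIV. \<Sum>j\<in>UNIV. (A $ i $ j)^2) \<le> (\<Sum>i\<in>(UNIV::'m set). \<Sum>j\<in>(UNIV::'n set). ?o^2)"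
  proof (intro sum_mono)
    fix i j
    have "\<bar>A $ i $ j\<bar> \<le> ?o" by (rule matrix_component_le_onorm)
    then show "(A $ i $ j)^2 \<le> ?o^2"
      by (metis abs_ge_zero power2_abs power_mono)
  qed
  also have "\<dots> = (sqrt (real CARD('m) * real CARD('n)) * ?o)^2"
    by (simp add: power_mult_distrib)
  finally have "frob_norm A \<le> sqrt ((sqrt (real CARD('m) * real CARD('n)) * ?o)^2)"
    unfolding frob_norm_def by (rule real_sqrt_le_mono)
  also have "\<dots> = sqrt (real CARD('m) * real CARD('n)) * ?o"
    using on_nonneg[of A] by simp
  finally show ?thesis .
qed

lemma onorm_le_frob:
  "onorm ((*v) (A::real^'n^'m)) \<le> real CARD('m) * real CARD('n) * frob_norm A"
proof -
  have "onorm ((*v) A) \<le> (\<Sum>i\<in>UNIV. \<Sum>j\<in>UNIV. \<bar>A $ i $ j\<bar>)"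
    by (rule onorm_le_matrix_component_sum)
  also have "\<dots> \<le> (\<Sum>i\<in>(UNIV::'m set). \<Sum>j\<in>(UNIV::'n set). frob_norm A)"
    by (intro sum_mono entry_le_frob)
  also have "\<dots> = real CARD('m) * real CARD('n) * frob_norm A" by simp
  finally show ?thesis .
qed

lemma nn_integral_prod_split:
  assumes N: "sigma_finite_measure N"
    and f[measurable]: "f \<in> borel_measurable M" and g[measurable]: "g \<in> borel_measurable N"
  shows "(\<integral>\<^sup>+p. f (fst p) * g (snd p) \<partial>(M \<Otimes>\<^sub>M N)) = (\<integral>\<^sup>+x. f x \<partial>M) * (\<integral>\<^sup>+y. g y \<partial>N)"
proof -
  have "(\<integral>\<^sup>+p. f (fst p) * g (snd p) \<partial>(M \<Otimes>\<^sub>M N)) = (\<integral>\<^sup>+x. \<integral>\<^sup>+y. f x * g y \<partial>N \<partial>M)"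
    using sigma_finite_measure.nn_integral_fst[OF N, of "\<lambda>p. f (fst p) * g (snd p)" M] by simp
  also have "\<dots> = (\<integral>\<^sup>+x. f x * (\<integral>\<^sup>+y. g y \<partial>N) \<partial>M)"
    by (simp add: nn_integral_cmult)
  also have "\<dots> = (\<integral>\<^sup>+x. f x \<partial>M) * (\<integral>\<^sup>+y. g y \<partial>N)"
    by (simp add: nn_integral_multc)
  finally show ?thesis .
qed



theorem proposition3:
  fixes P Q :: "'z measure"
    and W :: "real^'n^'m"
    and h :: "'z \<Rightarrow> real^'n"
    and grad :: "real^'n^'m \<Rightarrow> 'z \<Rightarrow> real^'m"
    and K :: "'z \<Rightarrow> real"
    and \<rho> c_rem :: real
  defines "d \<equiv> grad W"
    and "Ch \<equiv> (LINT z|P. outer (h z) (h z))"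
    and "Cd \<equiv> (LINT z|P. outer (grad W z) (grad W z))"
  assumes P: "prob_space P" and Q: "prob_space Q"
    and h_meas: "h \<in> borel_measurable P" "h \<in> borel_measurable Q"
    and grad_meas: "\<And>V. grad V \<in> borel_measurable P" "\<And>V. grad V \<in> borel_measurable Q"
    and int_Ch: "integrable P (\<lambda>z. outer (h z) (h z))"
    and int_Cd: "integrable P (\<lambda>z. outer (grad W z) (grad W z))"
    and spd_Ch: "spd_mat Ch" and spd_Cd: "spd_mat Cd"
    \<comment> \<open>(B1)\<close>
    and B1P: "(\<integral>\<^sup>+ z. ennreal (norm (inv_sqrt Cd *v d z) * norm (inv_sqrt Ch *v h z)) \<partial>P) < \<infinity>"
    and B1Q: "(\<integral>\<^sup>+ z. ennreal (norm (inv_sqrt Cd *v d z) * norm (inv_sqrt Ch *v h z)) \<partial>Q) < \<infinity>"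
    \<comment> \<open>(B2)\<close>
    and K_meas: "K \<in> borel_measurable P" "K \<in> borel_measurable Q"
    and K_nonneg: "\<And>z. K z \<ge> 0"
    and B2P: "\<And>E z. z \<in> space P \<Longrightarrow> norm (grad (W - E) z - d z) \<le> K z * frob_norm E"
    and B2Q: "\<And>E z. z \<in> space Q \<Longrightarrow> norm (grad (W - E) z - d z) \<le> K z * frob_norm E"
    and B2P_int: "(\<integral>\<^sup>+ z. ennreal (K z * norm (inv_sqrt Ch *v h z)) \<partial>P) < \<infinity>"
    and B2Q_int: "(\<integral>\<^sup>+ z. ennreal (K z * norm (inv_sqrt Ch *v h z)) \<partial>Q) < \<infinity>"
    \<comment> \<open>(B3)\<close>
    and rho_pos: "\<rho> > 0"
    and B3: "\<And>E. frob_norm (inv_sqrt Cd ** (W - (W - E)) ** inv_sqrt Ch) \<le> \<rho> \<Longrightarrow>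
         (\<integral>\<^sup>+ p. ennreal \<bar>remainder_term (inv_sqrt Ch) (inv_sqrt Cd) h d (grad (W - E)) (fst p) (snd p)\<bar>
             \<partial>(P \<Otimes>\<^sub>M Q))
           \<le> ennreal (c_rem * (frob_norm (inv_sqrt Cd ** E ** inv_sqrt Ch))^2)"
  shows "\<exists>C\<kappa>::real. C\<kappa> > 0 \<and> (\<forall>E. frob_norm (inv_sqrt Cd ** E ** inv_sqrt Ch) \<le> \<rho> \<longrightarrow>
     (\<integral>\<^sup>+ p. ennreal \<bar>IF_score (inv_sqrt Ch) (inv_sqrt Cd) h (grad (W - E)) (fst p) (snd p)
                       - IF_score (inv_sqrt Ch) (inv_sqrt Cd) h d (fst p) (snd p)\<bar> \<partial>(P \<Otimes>\<^sub>M Q))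
       \<le> ennreal (C\<kappa> * frob_norm (inv_sqrt Cd ** E ** inv_sqrt Ch)))"

proof -
  interpret P: prob_space P by (rule P)
  interpret Q: prob_space Q by (rule Q)
  have d_meas[measurable]: "d \<in> borel_measurable P" "d \<in> borel_measurable Q"
    unfolding d_def by (rule grad_meas)+
  note [measurable] = h_meas grad_meas K_meas
  define A where "A = inv_sqrt Ch"
  define B where "B = inv_sqrt Cd"
  define Sh where "Sh = spd_sqrt Ch"
  define Sd where "Sd = spd_sqrt Cd"
  have AS: "A ** Sh = mat 1" using inv_sqrt_inverse(1)[OF spd_Ch] by (simp add: A_def Sh_def)
  have SB: "Sd ** B = mat 1" using inv_sqrt_inverse(2)[OF spd_Cd] by (simp add: B_def Sd_def)
  define onB where "onB = onorm ((*v) B)"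
  have onB_nn: "onB \<ge> 0" unfolding onB_def by (rule on_nonneg)
  define mn where "mn = real CARD('m) * real CARD('n)"
  have mn_nn: "mn \<ge> 0" unfolding mn_def by simp
  define \<kappa> where "\<kappa> = sqrt mn * onorm ((*v) Sd) * mn * onorm ((*v) Sh)"
  have kappa_nn: "\<kappa> \<ge> 0" using on_nonneg[of Sd] on_nonneg[of Sh] mn_nn by (simp add: \<kappa>_def)
  have frobE: "frob_norm E \<le> \<kappa> * frob_norm (B ** E ** A)" for E
  proof -
    define X where "X = B ** E ** A"
    have "Sd ** X ** Sh = (Sd ** B) ** E ** (A ** Sh)" by (simp add: X_def matrix_mul_assoc)
    then have EX: "E = Sd ** X ** Sh" by (simp add: SB AS)
    have onE: "onorm ((*v) E) \<le> onorm ((*v) Sd) * (onorm ((*v) X) * onorm ((*v) Sh))"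
    proof (rule onorm_le)
      fix v
      have "norm (E *v v) = norm (Sd *v (X *v (Sh *v v)))" by (subst EX) (simp add: matrix_vector_mul_assoc matrix_mul_assoc)
      also have "\<dots> \<le> onorm ((*v) Sd) * norm (X *v (Sh *v v))" by (rule on_bound)
      also have "\<dots> \<le> onorm ((*v) Sd) * (onorm ((*v) X) * norm (Sh *v v))"
        by (intro mult_left_mono on_bound on_nonneg)
      also have "\<dots> \<le> onorm ((*v) Sd) * (onorm ((*v) X) * (onorm ((*v) Sh) * norm v))"
        by (intro mult_left_mono on_bound on_nonneg mult_nonneg_nonneg)
      finally show "norm (E *v v) \<le> onorm ((*v) Sd) * (onorm ((*v) X) * onorm ((*v) Sh)) * norm v"
        by (simp add: mult.assoc)
    qed
    have oX: "onorm ((*v) X) \<le> mn * frob_norm X" using onorm_le_frob[of X] by (simp add: mn_def)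
    have "frob_norm E \<le> sqrt mn * onorm ((*v) E)" using frob_le_onorm[of E] by (simp add: mn_def)
    also have "\<dots> \<le> sqrt mn * (onorm ((*v) Sd) * (onorm ((*v) X) * onorm ((*v) Sh)))"
      by (intro mult_left_mono onE) (simp add: mn_nn)
    also have "\<dots> \<le> sqrt mn * (onorm ((*v) Sd) * ((mn * frob_norm X) * onorm ((*v) Sh)))"
      by (intro mult_left_mono mult_right_mono oX on_nonneg) (simp_all add: mn_nn)
    also have "\<dots> = \<kappa> * frob_norm (B ** E ** A)" by (simp add: \<kappa>_def X_def mult_ac)
    finally show ?thesis .
  qed
  have Dd: "norm (B *v grad (W - E) z - B *v d z) \<le> onB * (K z * frob_norm E)"
    if "norm (grad (W - E) z - d z) \<le> K z * frob_norm E" for E z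
  proof -
    have "norm (B *v grad (W - E) z - B *v d z) = norm (B *v (grad (W - E) z - d z))"
      by (simp add: matrix_vector_mult_diff_distrib)
    also have "\<dots> \<le> onB * norm (grad (W - E) z - d z)" unfolding onB_def by (rule on_bound)
    also have "\<dots> \<le> onB * (K z * frob_norm E)" by (intro mult_left_mono that onB_nn)
    finally show ?thesis .
  qed
  define ht where "ht = (\<lambda>x. A *v h x)"
  define dt where "dt = (\<lambda>x. B *v d x)"
  define f1 where "f1 = (\<lambda>z. norm (B *v d z) * norm (A *v h z))"
  define g1 where "g1 = (\<lambda>z. K z * norm (A *v h z))"
  have f1_nn: "f1 z \<ge> 0" for z by (simp add: f1_def)
  have g1_nn: "g1 z \<ge> 0" for z by (simp add: g1_def K_nonneg)
  have f1_meas[measurable]: "f1 \<in> borel_measurable P" "f1 \<in> borel_measurable Q"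
    unfolding f1_def by measurable
  have g1_meas[measurable]: "g1 \<in> borel_measurable P" "g1 \<in> borel_measurable Q"
    unfolding g1_def by measurable
  have first_bd: "\<bar>first_order_term A B h d (grad (W - E)) z z'\<bar>
      \<le> onB * frob_norm E * (f1 z * g1 z' + g1 z * f1 z')"
    if z: "z \<in> space P" and z': "z' \<in> space Q" for E z z'
  proof -
    define a where "a = B *v grad (W - E) z' - B *v d z'"
    define dd where "dd = B *v grad (W - E) z - B *v d z"
    define c where "c = ht z' \<bullet> ht z"
    have eqF: "first_order_term A B h d (grad (W - E)) z z' = - ((a \<bullet> dt z) * c) - ((dt z' \<bullet> dd) * c)"
      by (simp only: first_order_term_def Let_def a_def dd_def c_def ht_def dt_def)
    have a: "norm a \<le> onB * (K z' * frob_norm E)" unfolding a_def by (rule Dd[OF B2Q[OF z']])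
    have dd: "norm dd \<le> onB * (K z * frob_norm E)" unfolding dd_def by (rule Dd[OF B2P[OF z]])
    have c: "\<bar>c\<bar> \<le> norm (ht z') * norm (ht z)" unfolding c_def by (rule Cauchy_Schwarz_ineq2)
    have i1: "\<bar>a \<bullet> dt z\<bar> \<le> onB * (K z' * frob_norm E) * norm (dt z)"
      using Cauchy_Schwarz_ineq2[of a "dt z"] mult_right_mono[OF a norm_ge_zero[of "dt z"]] by linarith
    have i2: "\<bar>dt z' \<bullet> dd\<bar> \<le> norm (dt z') * (onB * (K z * frob_norm E))"
      using Cauchy_Schwarz_ineq2[of "dt z'" dd] mult_left_mono[OF dd norm_ge_zero[of "dt z'"]] by linarith
    have t1: "\<bar>(a \<bullet> dt z) * c\<bar> \<le> (onB * (K z' * frob_norm E) * norm (dt z)) * (norm (ht z') * norm (ht z))"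
      unfolding abs_mult by (rule mult_mono[OF i1 c]) (use i1 in \<open>auto intro: order_trans[OF abs_ge_zero]\<close>)
    have t2: "\<bar>(dt z' \<bullet> dd) * c\<bar> \<le> (norm (dt z') * (onB * (K z * frob_norm E))) * (norm (ht z') * norm (ht z))"
      unfolding abs_mult by (rule mult_mono[OF i2 c]) (use i2 in \<open>auto intro: order_trans[OF abs_ge_zero]\<close>)
    have "\<bar>first_order_term A B h d (grad (W - E)) z z'\<bar> \<le> \<bar>(a \<bullet> dt z) * c\<bar> + \<bar>(dt z' \<bullet> dd) * c\<bar>"
      unfolding eqF by linarith
    also have "\<dots> \<le> (onB * (K z' * frob_norm E) * norm (dt z)) * (norm (ht z') * norm (ht z))
        + (norm (dt z') * (onB * (K z * frob_norm E))) * (norm (ht z') * norm (ht z))"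
      using t1 t2 by linarith
    also have "\<dots> = onB * frob_norm E * (f1 z * g1 z' + g1 z * f1 z')"
      by (simp add: f1_def g1_def ht_def dt_def algebra_simps)
    finally show ?thesis .
  qed
  define I1 where "I1 = (\<integral>\<^sup>+ z. ennreal (f1 z) \<partial>P)"
  define J1 where "J1 = (\<integral>\<^sup>+ z. ennreal (g1 z) \<partial>Q)"
  define I2 where "I2 = (\<integral>\<^sup>+ z. ennreal (g1 z) \<partial>P)"
  define J2 where "J2 = (\<integral>\<^sup>+ z. ennreal (f1 z) \<partial>Q)"
  have fin: "I1 < \<top>" "J1 < \<top>" "I2 < \<top>" "J2 < \<top>"
    using B1P B1Q B2P_int B2Q_int
    by (simp_all add: I1_def J1_def I2_def J2_def f1_def g1_def A_def B_def)
  define Jc where "Jc = enn2real (I1 * J1 + I2 * J2)"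
  have Jc_eq: "ennreal Jc = I1 * J1 + I2 * J2"
    unfolding Jc_def using fin by (simp add: ennreal_mult_less_top)
  have Jc_nn: "Jc \<ge> 0" unfolding Jc_def by simp
  define C\<kappa> where "C\<kappa> = onB * \<kappa> * Jc + max c_rem 0 * \<rho> + 1"
  have Cpos: "C\<kappa> > 0" unfolding C\<kappa>_def
    using onB_nn kappa_nn Jc_nn rho_pos by (simp add: add_nonneg_pos)
  show ?thesis
  proof (intro exI[of _ C\<kappa>] conjI allI impI Cpos)
    fix E assume xr: "frob_norm (inv_sqrt Cd ** E ** inv_sqrt Ch) \<le> \<rho>"
    define e where "e = frob_norm E"
    define x where "x = frob_norm (B ** E ** A)"
    have xr': "x \<le> \<rho>" using xr by (simp add: x_def A_def B_def)
    have x_nn: "x \<ge> 0" unfolding x_def by (rule frob_nonneg)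
    have e_nn: "e \<ge> 0" unfolding e_def by (rule frob_nonneg)
    define R where "R = (\<lambda>p. remainder_term A B h d (grad (W - E)) (fst p) (snd p))"
    define G where "G = (\<lambda>p. onB * e * (f1 (fst p) * g1 (snd p) + g1 (fst p) * f1 (snd p)))"
    have G_nn: "G p \<ge> 0" for p unfolding G_def using onB_nn e_nn f1_nn g1_nn by simp
    have R_meas[measurable]: "(\<lambda>p. ennreal \<bar>R p\<bar>) \<in> borel_measurable (P \<Otimes>\<^sub>M Q)"
      unfolding R_def remainder_term_def IF_score_def first_order_term_def Let_def by measurable
    have G_meas[measurable]: "(\<lambda>p. ennreal (G p)) \<in> borel_measurable (P \<Otimes>\<^sub>M Q)"
      unfolding G_def by measurable
    have "(\<integral>\<^sup>+ p. ennreal \<bar>IF_score A B h (grad (W - E)) (fst p) (snd p)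
                       - IF_score A B h d (fst p) (snd p)\<bar> \<partial>(P \<Otimes>\<^sub>M Q))
        \<le> (\<integral>\<^sup>+ p. ennreal (G p) + ennreal \<bar>R p\<bar> \<partial>(P \<Otimes>\<^sub>M Q))"
    proof (rule nn_integral_mono)
      fix p assume "p \<in> space (P \<Otimes>\<^sub>M Q)"
      then have sp: "fst p \<in> space P" "snd p \<in> space Q" by (auto simp: space_pair_measure)
      have "IF_score A B h (grad (W - E)) (fst p) (snd p) - IF_score A B h d (fst p) (snd p)
          = first_order_term A B h d (grad (W - E)) (fst p) (snd p) + R p"
        by (simp add: R_def remainder_term_def)
      then have "\<bar>IF_score A B h (grad (W - E)) (fst p) (snd p) - IF_score A B h d (fst p) (snd p)\<bar>
          \<le> G p + \<bar>R p\<bar>"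
        using first_bd[OF sp, of E] unfolding G_def e_def by linarith
      then have "ennreal \<bar>IF_score A B h (grad (W - E)) (fst p) (snd p) - IF_score A B h d (fst p) (snd p)\<bar>
          \<le> ennreal (G p + \<bar>R p\<bar>)" by (rule ennreal_leI)
      also have "\<dots> = ennreal (G p) + ennreal \<bar>R p\<bar>" using G_nn[of p] by simp
      finally show "ennreal \<bar>IF_score A B h (grad (W - E)) (fst p) (snd p) - IF_score A B h d (fst p) (snd p)\<bar>
          \<le> ennreal (G p) + ennreal \<bar>R p\<bar>" .
    qed
    also have "\<dots> = (\<integral>\<^sup>+ p. ennreal (G p) \<partial>(P \<Otimes>\<^sub>M Q)) + (\<integral>\<^sup>+ p. ennreal \<bar>R p\<bar> \<partial>(P \<Otimes>\<^sub>M Q))"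
      by (rule nn_integral_add) measurable
    also have "(\<integral>\<^sup>+ p. ennreal (G p) \<partial>(P \<Otimes>\<^sub>M Q)) = ennreal (onB * e * Jc)"
    proof -
      have "(\<integral>\<^sup>+ p. ennreal (G p) \<partial>(P \<Otimes>\<^sub>M Q)) = (\<integral>\<^sup>+ p. ennreal (onB * e) *
          (ennreal (f1 (fst p)) * ennreal (g1 (snd p)) + ennreal (g1 (fst p)) * ennreal (f1 (snd p))) \<partial>(P \<Otimes>\<^sub>M Q))"
        by (rule nn_integral_cong)
          (simp add: G_def ennreal_mult onB_nn e_nn f1_nn g1_nn mult_nonneg_nonneg)
      also have "\<dots> = ennreal (onB * e) * ((\<integral>\<^sup>+ p. ennreal (f1 (fst p)) * ennreal (g1 (snd p)) \<partial>(P \<Otimes>\<^sub>M Q))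
          + (\<integral>\<^sup>+ p. ennreal (g1 (fst p)) * ennreal (f1 (snd p)) \<partial>(P \<Otimes>\<^sub>M Q)))"
        by (simp add: nn_integral_cmult nn_integral_add)
      also have "\<dots> = ennreal (onB * e) * (I1 * J1 + I2 * J2)"
      proof -
        have s1: "(\<integral>\<^sup>+ p. ennreal (f1 (fst p)) * ennreal (g1 (snd p)) \<partial>(P \<Otimes>\<^sub>M Q)) = I1 * J1"
          unfolding I1_def J1_def
          by (rule nn_integral_prod_split[OF Q.sigma_finite_measure_axioms,
                where f="\<lambda>x. ennreal (f1 x)" and g="\<lambda>y. ennreal (g1 y)"]) measurable
        have s2: "(\<integral>\<^sup>+ p. ennreal (g1 (fst p)) * ennreal (f1 (snd p)) \<partial>(P \<Otimes>\<^sub>M Q)) = I2 * J2"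
          unfolding I2_def J2_def
          by (rule nn_integral_prod_split[OF Q.sigma_finite_measure_axioms,
                where f="\<lambda>x. ennreal (g1 x)" and g="\<lambda>y. ennreal (f1 y)"]) measurable
        show ?thesis by (simp only: s1 s2)
      qed
      also have "\<dots> = ennreal (onB * e * Jc)"
        by (simp add: Jc_eq[symmetric] ennreal_mult onB_nn e_nn Jc_nn)
      finally show ?thesis .
    qed
    also have "(\<integral>\<^sup>+ p. ennreal \<bar>R p\<bar> \<partial>(P \<Otimes>\<^sub>M Q)) \<le> ennreal (c_rem * x^2)"
    proof -
      have "frob_norm (inv_sqrt Cd ** (W - (W - E)) ** inv_sqrt Ch) \<le> \<rho>" using xr by simp
      from B3[OF this] show ?thesis by (simp add: R_def x_def A_def B_def)
    qed
    also have "ennreal (onB * e * Jc) + ennreal (c_rem * x^2)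
        \<le> ennreal (onB * \<kappa> * Jc * x) + ennreal (max c_rem 0 * \<rho> * x)"
    proof (rule add_mono; rule ennreal_leI)
      have "e \<le> \<kappa> * x" unfolding e_def x_def by (rule frobE)
      then have "onB * e * Jc \<le> onB * (\<kappa> * x) * Jc"
        by (intro mult_right_mono mult_left_mono onB_nn Jc_nn)
      then show "onB * e * Jc \<le> onB * \<kappa> * Jc * x" by (simp add: mult_ac)
      have "c_rem * x^2 \<le> max c_rem 0 * (x * x)" by (simp add: power2_eq_square mult_right_mono x_nn)
      also have "\<dots> \<le> max c_rem 0 * (\<rho> * x)"
        by (intro mult_left_mono mult_right_mono xr' x_nn) simp_all
      finally show "c_rem * x^2 \<le> max c_rem 0 * \<rho> * x" by (simp add: mult_ac)
    qed
    also have "\<dots> = ennreal (onB * \<kappa> * Jc * x + max c_rem 0 * \<rho> * x)"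
      using onB_nn kappa_nn Jc_nn x_nn rho_pos by (simp add: ennreal_plus)
    also have "\<dots> \<le> ennreal (C\<kappa> * x)"
      by (rule ennreal_leI) (simp add: C\<kappa>_def algebra_simps x_nn)
    finally show "(\<integral>\<^sup>+ p. ennreal \<bar>IF_score (inv_sqrt Ch) (inv_sqrt Cd) h (grad (W - E)) (fst p) (snd p)
                       - IF_score (inv_sqrt Ch) (inv_sqrt Cd) h d (fst p) (snd p)\<bar> \<partial>(P \<Otimes>\<^sub>M Q))
       \<le> ennreal (C\<kappa> * frob_norm (inv_sqrt Cd ** E ** inv_sqrt Ch))"
      by (simp add: x_def A_def B_def add_mono)
  qed
qed

end
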